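(* Let $v,k,t$ be integers with $v>k>t\ge 2$. Let $X$ be a $v$-set and let $X=X_1\cup X_2$ be a partition of $X$ with $|X_1|=v_1$ and $|X_2|=v_2$. For $i=0,\dots,t$ let $D_i=(X_1,\mathfrak B^{(i)})$ be the complete $i$-$(v_1,i,1)$ design (all $i$-subsets of $X_1$), and for $i=t+1,\dots,k$ let $D_i=(X_1,\mathfrak B^{(i)})$ be a simple $t$-$(v_1,i,\lambda^{(i)}_t)$ design. Similarly, for $i=0,\dots,t$ let $\bar D_i=(X_2,\bar{\mathfrak B}^{(i)})$ be the complete $i$-$(v_2,i,1)$ design, and for $i=t+1,\dots,k$ let $\bar D_i=(X_2,\bar{\mathfrak B}^{(i)})$ be a simple $t$-$(v_2,i,\bar\lambda^{(i)}_t)$ design. Let $K=\{(0,k),(1,k-1),\dots,(k-1,1),(k,0)\}$. Suppose there is a subset $R\subseteq K$ such that for each $(i,k-i)\in R$ the block set of $D_i$ is partitioned into $N_i$ classes $\mathfrak A^{(i)}_1,\dots,\mathfrak A^{(i)}_{N_i}$, each $(X_1,\mathfrak A^{(i)}_h)$ being an $s_i$-$(v_1,i,\lambda^{*(i)}_{s_i})$ design (same index for all $h$), with $s_i<t$, and the block set of $\bar D_{k-i}$ is partitioned into $\bar N_{k-i}$ classes $\bar{\mathfrak A}^{(k-i)}_1,\dots,\bar{\mathfrak A}^{(k-i)}_{\bar N_{k-i}}$, each $(X_2,\bar{\mathfrak A}^{(k-i)}_j)$ being an $s_{k-i}$-$(v_2,k-i,\bar\lambda^{*(k-i)}_{s_{k-i}})$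 design (same index for all $j$), with $s_{k-i}<t$, such that (i) $N_i=\bar N_{k-i}$, and (ii) $s_i+s_{k-i}\ge 2\lfloor t/2\rfloor$. For each $(i,k-i)\in R$ choose $\varepsilon_i\in\{0,1\}$ and an integer $w_i$ with $\varepsilon_i\le w_i\le\lfloor N_i/2\rfloor$, and set $$\mathfrak B^*_{(i,k-i)}=\{B_i\cup\bar B_{k-i}:\ B_i\in\mathfrak A^{(i)}_h,\ \bar B_{k-i}\in\bar{\mathfrak A}^{(k-i)}_j,\ \varepsilon_i\le d(h,j)\le w_i\},$$ where $d(h,j)=\min\{|h-j|,\,N_i-|h-j|\}$ for $h,j\in\{1,\dots,N_i\}$; and put $z_i=2w_i+1-\varepsilon_i$ if $w_i<N_i/2$, and $z_i=2w_i-\varepsilon_i$ if $w_i=N_i/2$. For each $(i,k-i)\in K\setminus R$ set $$\mathfrak B_{(i,k-i)}=\{B_i\cup\bar B_{k-i}:\ B_i\in\mathfrak B^{(i)},\ \bar B_{k-i}\in\bar{\mathfrak B}^{(k-i)}\}.$$ Choose $u_i\in\{0,1\}$ for $i=0,\dots,k$ and define $$\mathfrak B=\bigcup_{(i,k-i)\in R}\mathfrak B^*_{(i,k-i)}\times[u_i]\ \cup\bigcup_{(i,k-i)\in K\setminus R}\mathfrak B_{(i,k-i)}\times[u_i].$$ For $r=0,\dots,t$ define $$L_{r,t-r}=\sum_{(i,k-i)\in R}u_i\,\Lambda^{*(i,k-i)}_{(r,t-r)}+\sum_{(i,k-i)\in K\setminus R}u_i\,\lambda^{(i)}_r\,\bar\lambda^{(k-i)}_{t-r},$$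 where $$\Lambda^{*(i,k-i)}_{(r,t-r)}=\begin{cases}\lambda^{*(i)}_r\,\bar\lambda^{*(k-i)}_{t-r}\,N_i\,z_i & \text{if } r\le s_i,\ t-r\le s_{k-i},\\ \lambda^{*(i)}_r\,\bar\lambda^{(k-i)}_{t-r}\,z_i & \text{if } r\le s_i,\ t-r>s_{k-i},\\ \lambda^{(i)}_r\,\bar\lambda^{*(k-i)}_{t-r}\,z_i & \text{if } r>s_i,\ t-r\le s_{k-i}.\end{cases}$$ If $L_{0,t}=L_{1,t-1}=\dots=L_{t,0}=\Lambda$ for some positive integer $\Lambda$, then $(X,\mathfrak B)$ is a simple $t$-$(v,k,\Lambda)$ design.
   Context: A $t$-$(v,k,\lambda)$ design is a pair $(X,\mathfrak B)$ with $|X|=v$ and $\mathfrak B$ a collection of $k$-subsets (blocks) of $X$ such that every $t$-subset of $X$ lies in exactly $\lambda$ blocks; it is simple if no block is repeated. A $t$-$(v,k,\lambda)$ design is also an $s$-$(v,k,\lambda_s)$ design for $0\le s\le t$ with $\lambda_s=\lambda\binom{v-s}{t-s}/\binom{k-s}{t-s}$. Conventions: the $0$-$(v_1,0,1)$ design has exactly one block, the empty set; a design with $k$ equal to the number of points has the single block consisting of all points. Notation: $\lambda^{(i)}_r$ denotes the number of blocks of $D_i$ containing a given $r$-subset of $X_1$ (for $0\le r\le t$; it is $0$ when $r>i$), and $\bar\lambda^{(i)}_r$ the analogous number for $\bar D_i$ and $X_2$. For $r\le s_i$, $\lambda^{*(i)}_r$ denotes the number of blocks of a class $\mathfrak A^{(i)}_h$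 containing a given $r$-subset of $X_1$ (independent of $h$ and of the subset), and $\bar\lambda^{*(k-i)}_r$ (for $r\le s_{k-i}$) the analogous number for classes $\bar{\mathfrak A}^{(k-i)}_j$. For a set $Y$ and $u\in\{0,1\}$, $Y\times[0]=\emptyset$ and $Y\times[1]=Y$. *)

theory Defs
  imports Main
begin

text \<open>A (simple) t-(v,k,lambda) design on point set X with block set Bs:
  blocks are k-subsets of X (a set of blocks, hence no repeated blocks) and every
  t-subset of X lies in exactly lambda blocks.\<close>
definition is_design :: "'a set \<Rightarrow> nat \<Rightarrow> nat \<Rightarrow> nat \<Rightarrow> 'a set set \<Rightarrow> bool" where
  "is_design X k t lam Bs \<longleftrightarrow>
     finite X \<and> (\<forall>B\<in>Bs. B \<subseteq> X \<and> card B = k) \<and>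
     (\<forall>T. T \<subseteq> X \<and> card T = t \<longrightarrow> card {B\<in>Bs. T \<subseteq> B} = lam)"

definition complete_blocks :: "'a set \<Rightarrow> nat \<Rightarrow> 'a set set" where
  "complete_blocks X k = {B. B \<subseteq> X \<and> card B = k}"

definition cdist :: "nat \<Rightarrow> nat \<Rightarrow> nat \<Rightarrow> nat" where
  "cdist N h j = min (nat \<bar>int h - int j\<bar>) (N - nat \<bar>int h - int j\<bar>)"

text \<open>Y \<times> [u]: empty for u = 0, Y for u = 1.\<close>
definition times01 :: "'b set \<Rightarrow> nat \<Rightarrow> 'b set" where
  "times01 Y u = (if u = 0 then {} else Y)"

definition is_class_partition :: "'b set \<Rightarrow> nat \<Rightarrow> (nat \<Rightarrow> 'b set) \<Rightarrow> bool" where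
  "is_class_partition Bs n C \<longleftrightarrow>
     (\<forall>h\<in>{1..n}. C h \<noteq> {}) \<and>
     (\<forall>h\<in>{1..n}. \<forall>h'\<in>{1..n}. h \<noteq> h' \<longrightarrow> C h \<inter> C h' = {}) \<and>
     (\<Union>h\<in>{1..n}. C h) = Bs"

end

theory Submission
  imports Defs
begin

lemma count_mod:
  fixes N eps w :: nat
  assumes "1 \<le> N" "eps \<le> 1" "eps \<le> w" "2 * w \<le> N"
  shows "card {m. m < N \<and> eps \<le> min m (N - m) \<and> min m (N - m) \<le> w}
         = (if 2 * w < N then 2 * w + 1 - eps else 2 * w - eps)"
proof -
  have S: "{m. m < N \<and> eps \<le> min m (N - m) \<and> min m (N - m) \<le> w} = {eps..w} \<union> {N-w..<N}"
    using assms by auto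
  show ?thesis
  proof (cases "2 * w < N")
    case True
    have "{eps..w} \<inter> {N-w..<N} = {}" using True by auto
    then have "card ({eps..w} \<union> {N-w..<N}) = card {eps..w} + card {N-w..<N}"
      by (simp add: card_Un_disjoint)
    then show ?thesis using S True assms by simp
  next
    case False
    then have "{eps..w} \<union> {N-w..<N} = {eps..<2*w}" using assms by auto
    then show ?thesis using S False by simp
  qed
qed

lemma image_filter: "f ` {x\<in>A. P (f x)} = {y\<in>f ` A. P y}"
  by blast

lemma count_cdist:
  fixes N eps w j :: nat
  assumes "j \<in> {1..N}" "eps \<le> 1" "eps \<le> w" "w \<le> N div 2"
  shows "card {h\<in>{1..N}. eps \<le> cdist N h j \<and> cdist N h j \<le> w}
         = (if 2 * w < N then 2 * w + 1 - eps else 2 * w - eps)"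
proof -
  define f where "f h = (if j \<le> h then h - j else h + N - j)" for h
  have cd: "cdist N h j = min (f h) (N - f h)" if "h \<in> {1..N}" for h
    using that assms unfolding cdist_def f_def by (auto simp: min_def)
  have inj: "inj_on f {1..N}"
    using assms unfolding inj_on_def f_def by auto
  have img: "f ` {1..N} = {..<N}"
  proof
    show "f ` {1..N} \<subseteq> {..<N}" using assms unfolding f_def by auto
    show "{..<N} \<subseteq> f ` {1..N}"
    proof
      fix m assume m: "m \<in> {..<N}"
      show "m \<in> f ` {1..N}"
      proof (cases "m + j \<le> N")
        case True
        then have "f (m + j) = m" unfolding f_def by simp
        then show ?thesis using True assms by (metis atLeastAtMost_iff image_eqI le_add2 add_leE linorder_not_le not_one_le_zero order_trans le_add_same_cancel2)
      next
        case False
        then have "f (m + j - N) = m" using m assms unfolding f_def by auto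
        moreover have "m + j - N \<in> {1..N}" using False m assms by auto
        ultimately show ?thesis by (metis image_eqI)
      qed
    qed
  qed
  define Q where "Q m \<longleftrightarrow> eps \<le> min m (N - m) \<and> min m (N - m) \<le> w" for m
  have e1: "{h\<in>{1..N}. eps \<le> cdist N h j \<and> cdist N h j \<le> w} = {h\<in>{1..N}. Q (f h)}"
    using cd unfolding Q_def by auto
  have e2: "card {h\<in>{1..N}. Q (f h)} = card (f ` {h\<in>{1..N}. Q (f h)})"
    by (rule card_image[symmetric]) (rule inj_on_subset[OF inj], auto)
  have e3: "f ` {h\<in>{1..N}. Q (f h)} = {m\<in>{..<N}. Q m}"
    using image_filter[of f "{1..N}" Q] img by simp
  have e4: "{m\<in>{..<N}. Q m} = {m. m < N \<and> eps \<le> min m (N - m) \<and> min m (N - m) \<le> w}"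
    unfolding Q_def by auto
  have e5: "card {m. m < N \<and> eps \<le> min m (N - m) \<and> min m (N - m) \<le> w} = (if 2 * w < N then 2 * w + 1 - eps else 2 * w - eps)"
    using assms by (intro count_mod) auto
  show ?thesis using e1 e2 e3 e4 e5 by simp
qed

lemma cdist_sym: "cdist N h j = cdist N j h"
  unfolding cdist_def by (simp add: abs_minus_commute)

lemma sum_if_const: "finite A \<Longrightarrow> (\<Sum>x\<in>A. if P x then c else (0::nat)) = c * card {x\<in>A. P x}"
  by (simp add: sum.inter_filter[symmetric])

lemma dsum_a:
  fixes N eps w z :: nat and a b :: "nat \<Rightarrow> nat"
  assumes "eps \<le> 1" "eps \<le> w" "w \<le> N div 2"
    and z: "z = (if 2 * w < N then 2 * w + 1 - eps else 2 * w - eps)"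
    and a: "\<forall>h\<in>{1..N}. a h = \<alpha>"
  shows "(\<Sum>h\<in>{1..N}. \<Sum>j\<in>{1..N}. if eps \<le> cdist N h j \<and> cdist N h j \<le> w then a h * b j else 0)
         = \<alpha> * z * (\<Sum>j\<in>{1..N}. b j)"
proof -
  have "(\<Sum>h\<in>{1..N}. \<Sum>j\<in>{1..N}. if eps \<le> cdist N h j \<and> cdist N h j \<le> w then a h * b j else 0)
      = (\<Sum>j\<in>{1..N}. \<Sum>h\<in>{1..N}. if eps \<le> cdist N h j \<and> cdist N h j \<le> w then \<alpha> * b j else 0)"
    using a by (subst sum.swap) (intro sum.cong refl, auto)
  also have "\<dots> = (\<Sum>j\<in>{1..N}. \<alpha> * b j * z)"
  proof (rule sum.cong[OF refl])
    fix j assume j: "j \<in> {1..N}"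
    show "(\<Sum>h\<in>{1..N}. if eps \<le> cdist N h j \<and> cdist N h j \<le> w then \<alpha> * b j else 0) = \<alpha> * b j * z"
      using count_cdist[OF j assms(1-3)] z by (simp add: sum_if_const)
  qed
  also have "\<dots> = \<alpha> * z * (\<Sum>j\<in>{1..N}. b j)"
    by (simp add: sum_distrib_left mult_ac)
  finally show ?thesis .
qed

lemma dsum_b:
  fixes N eps w z :: nat and a b :: "nat \<Rightarrow> nat"
  assumes "eps \<le> 1" "eps \<le> w" "w \<le> N div 2"
    and z: "z = (if 2 * w < N then 2 * w + 1 - eps else 2 * w - eps)"
    and b: "\<forall>j\<in>{1..N}. b j = \<beta>"
  shows "(\<Sum>h\<in>{1..N}. \<Sum>j\<in>{1..N}. if eps \<le> cdist N h j \<and> cdist N h j \<le> w then a h * b j else 0)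
         = \<beta> * z * (\<Sum>h\<in>{1..N}. a h)"
proof -
  have "(\<Sum>h\<in>{1..N}. \<Sum>j\<in>{1..N}. if eps \<le> cdist N h j \<and> cdist N h j \<le> w then a h * b j else 0)
      = (\<Sum>h\<in>{1..N}. \<Sum>j\<in>{1..N}. if eps \<le> cdist N j h \<and> cdist N j h \<le> w then \<beta> * a h else 0)"
    using b by (intro sum.cong refl) (auto simp: cdist_sym mult.commute)
  also have "\<dots> = (\<Sum>h\<in>{1..N}. \<beta> * a h * z)"
  proof (rule sum.cong[OF refl])
    fix h assume h: "h \<in> {1..N}"
    show "(\<Sum>j\<in>{1..N}. if eps \<le> cdist N j h \<and> cdist N j h \<le> w then \<beta> * a h else 0) = \<beta> * a h * z"
      using count_cdist[OF h assms(1-3)] z by (simp add: sum_if_const)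
  qed
  also have "\<dots> = \<beta> * z * (\<Sum>h\<in>{1..N}. a h)"
    by (simp add: sum_distrib_left mult_ac)
  finally show ?thesis .
qed


lemma card_union_pairs:
  assumes "X1 \<inter> X2 = {}" "\<forall>B Bb. Rel B Bb \<longrightarrow> B \<subseteq> X1 \<and> Bb \<subseteq> X2" "T \<subseteq> X1 \<union> X2"
  shows "card {x \<in> {B \<union> Bb | B Bb. Rel B Bb}. T \<subseteq> x}
       = card {(B,Bb). Rel B Bb \<and> T \<inter> X1 \<subseteq> B \<and> T \<inter> X2 \<subseteq> Bb}"
proof -
  let ?P = "{(B,Bb). Rel B Bb \<and> T \<inter> X1 \<subseteq> B \<and> T \<inter> X2 \<subseteq> Bb}"
  have img: "{x \<in> {B \<union> Bb | B Bb. Rel B Bb}. T \<subseteq> x} = (\<lambda>(B,Bb). B \<union> Bb) ` ?P"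
  proof (rule set_eqI, rule iffI)
    fix x assume "x \<in> {x \<in> {B \<union> Bb | B Bb. Rel B Bb}. T \<subseteq> x}"
    then obtain B Bb where x: "x = B \<union> Bb" "Rel B Bb" "T \<subseteq> x" by blast
    then have "B \<subseteq> X1" "Bb \<subseteq> X2" using assms(2) by auto
    then have "T \<inter> X1 \<subseteq> B" "T \<inter> X2 \<subseteq> Bb" using x assms(1) by auto
    then show "x \<in> (\<lambda>(B,Bb). B \<union> Bb) ` ?P" using x by (auto intro!: image_eqI[where x="(B,Bb)"])
  next
    fix x assume "x \<in> (\<lambda>(B,Bb). B \<union> Bb) ` ?P"
    then obtain B Bb where x: "x = B \<union> Bb" "Rel B Bb" "T \<inter> X1 \<subseteq> B" "T \<inter> X2 \<subseteq> Bb" by auto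
    then have "T \<subseteq> x" using assms(3) by auto
    then show "x \<in> {x \<in> {B \<union> Bb | B Bb. Rel B Bb}. T \<subseteq> x}" using x by auto
  qed
  have inj: "inj_on (\<lambda>(B,Bb). B \<union> Bb) ?P"
  proof (rule inj_onI, clarify)
    fix B Bb B' Bb' assume h: "Rel B Bb" "Rel B' Bb'" "B \<union> Bb = B' \<union> Bb'"
    then have s: "B \<subseteq> X1" "Bb \<subseteq> X2" "B' \<subseteq> X1" "Bb' \<subseteq> X2" using assms(2) by auto
    have "B = (B \<union> Bb) \<inter> X1" "B' = (B' \<union> Bb') \<inter> X1" using s assms(1) by auto
    moreover have "Bb = (B \<union> Bb) \<inter> X2" "Bb' = (B' \<union> Bb') \<inter> X2" using s assms(1) by auto
    ultimately show "B = B' \<and> Bb = Bb'" using h(3) by metis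
  qed
  show ?thesis unfolding img using card_image[OF inj] .
qed

lemma card_classes_sum:
  fixes N :: nat
  assumes "finite Bs" "is_class_partition Bs N C"
  shows "(\<Sum>h\<in>{1..N}. card {B\<in>C h. P B}) = card {B\<in>Bs. P B}"
proof -
  have U: "{B\<in>Bs. P B} = (\<Union>h\<in>{1..N}. {B\<in>C h. P B})"
    using assms(2) unfolding is_class_partition_def by auto
  have fin: "\<forall>h\<in>{1..N}. finite {B\<in>C h. P B}"
    using assms unfolding is_class_partition_def by (auto intro: finite_subset)
  have dis: "\<forall>h\<in>{1..N}. \<forall>h'\<in>{1..N}. h \<noteq> h' \<longrightarrow> {B\<in>C h. P B} \<inter> {B\<in>C h'. P B} = {}"
    using assms(2) unfolding is_class_partition_def by auto
  show ?thesis unfolding U using card_UN_disjoint[OF _ fin dis] by simp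
qed

lemma card_R_pairs:
  fixes N :: nat
  assumes disA: "\<forall>h\<in>{1..N}. \<forall>h'\<in>{1..N}. h \<noteq> h' \<longrightarrow> A h \<inter> A h' = {}"
    and disB: "\<forall>h\<in>{1..N}. \<forall>h'\<in>{1..N}. h \<noteq> h' \<longrightarrow> Ab h \<inter> Ab h' = {}"
    and finA: "\<forall>h\<in>{1..N}. finite (A h)" and finB: "\<forall>h\<in>{1..N}. finite (Ab h)"
  shows "card {(B,Bb). (\<exists>h\<in>{1..N}. \<exists>j\<in>{1..N}. B \<in> A h \<and> Bb \<in> Ab j \<and> c h j) \<and> P B \<and> Q Bb}
       = (\<Sum>h\<in>{1..N}. \<Sum>j\<in>{1..N}. if c h j then card {B\<in>A h. P B} * card {Bb\<in>Ab j. Q Bb} else 0)"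
proof -
  define S where "S h j = (if c h j then {B\<in>A h. P B} \<times> {Bb\<in>Ab j. Q Bb} else {})" for h j
  have U: "{(B,Bb). (\<exists>h\<in>{1..N}. \<exists>j\<in>{1..N}. B \<in> A h \<and> Bb \<in> Ab j \<and> c h j) \<and> P B \<and> Q Bb}
      = (\<Union>h\<in>{1..N}. \<Union>j\<in>{1..N}. S h j)"
    unfolding S_def by (auto split: if_splits)
  have finS: "finite (S h j)" if "h \<in> {1..N}" "j \<in> {1..N}" for h j
    using finA finB that unfolding S_def by auto
  have cS: "card (S h j) = (if c h j then card {B\<in>A h. P B} * card {Bb\<in>Ab j. Q Bb} else 0)" for h j
    unfolding S_def by (simp add: card_cartesian_product)
  have inner: "card (\<Union>j\<in>{1..N}. S h j) = (\<Sum>j\<in>{1..N}. card (S h j))" if h: "h \<in> {1..N}" for h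
  proof (rule card_UN_disjoint)
    show "finite {1..N}" by simp
    show "\<forall>j\<in>{1..N}. finite (S h j)" using finS h by auto
    show "\<forall>j\<in>{1..N}. \<forall>j'\<in>{1..N}. j \<noteq> j' \<longrightarrow> S h j \<inter> S h j' = {}"
      using disB unfolding S_def by (auto simp add: disjoint_iff)
  qed
  have outer: "card (\<Union>h\<in>{1..N}. \<Union>j\<in>{1..N}. S h j) = (\<Sum>h\<in>{1..N}. card (\<Union>j\<in>{1..N}. S h j))"
  proof (rule card_UN_disjoint)
    show "finite {1..N}" by simp
    show "\<forall>h\<in>{1..N}. finite (\<Union>j\<in>{1..N}. S h j)" using finS by auto
    show "\<forall>h\<in>{1..N}. \<forall>h'\<in>{1..N}. h \<noteq> h' \<longrightarrow> (\<Union>j\<in>{1..N}. S h j) \<inter> (\<Union>j\<in>{1..N}. S h' j) = {}"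
      using disA unfolding S_def by (auto simp add: disjoint_iff)
  qed
  show ?thesis unfolding U outer using inner cS by simp
qed


theorem theorem3p1:
  fixes X X1 X2 :: "'a set"
    and k t :: nat
    and D Dbar :: "nat \<Rightarrow> 'a set set"
    and lam lamb :: "nat \<Rightarrow> nat \<Rightarrow> nat"
    and R :: "nat set"
    and N Nbar s sbar :: "nat \<Rightarrow> nat"
    and A Abar :: "nat \<Rightarrow> nat \<Rightarrow> 'a set set"
    and lamS lamSb :: "nat \<Rightarrow> nat \<Rightarrow> nat"
    and eps w z u :: "nat \<Rightarrow> nat"
    and Lam :: nat
  assumes fin: "finite X"
    and part: "X = X1 \<union> X2" "X1 \<inter> X2 = {}" "X1 \<noteq> {}" "X2 \<noteq> {}"
    and params: "card X > k" "k > t" "t \<ge> 2"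
    and D_small: "\<forall>i\<le>t. D i = complete_blocks X1 i"
    and D_big: "\<forall>i. t < i \<and> i \<le> k \<longrightarrow> is_design X1 i t (lam i t) (D i)"
    and Dbar_small: "\<forall>i\<le>t. Dbar i = complete_blocks X2 i"
    and Dbar_big: "\<forall>i. t < i \<and> i \<le> k \<longrightarrow> is_design X2 i t (lamb i t) (Dbar i)"
    and lam_def: "\<forall>i\<le>k. \<forall>r\<le>t. \<forall>T. T \<subseteq> X1 \<and> card T = r \<longrightarrow> card {B\<in>D i. T \<subseteq> B} = lam i r"
    and lamb_def: "\<forall>i\<le>k. \<forall>r\<le>t. \<forall>T. T \<subseteq> X2 \<and> card T = r \<longrightarrow> card {B\<in>Dbar i. T \<subseteq> B} = lamb i r"
    and R_sub: "R \<subseteq> {0..k}"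
    and R_part: "\<forall>i\<in>R. is_class_partition (D i) (N i) (A i)
                     \<and> is_class_partition (Dbar (k - i)) (Nbar (k - i)) (Abar (k - i))"
    and R_cls: "\<forall>i\<in>R. (\<forall>h\<in>{1..N i}. is_design X1 i (s i) (lamS i (s i)) (A i h))
                  \<and> (\<forall>j\<in>{1..Nbar (k - i)}.
                       is_design X2 (k - i) (sbar (k - i)) (lamSb (k - i) (sbar (k - i))) (Abar (k - i) j))"
    and lamS_def: "\<forall>i\<in>R. \<forall>h\<in>{1..N i}. \<forall>r\<le>s i. \<forall>T. T \<subseteq> X1 \<and> card T = r \<longrightarrow>
                     card {B\<in>A i h. T \<subseteq> B} = lamS i r"
    and lamSb_def: "\<forall>i\<in>R. \<forall>j\<in>{1..Nbar (k - i)}. \<forall>r\<le>sbar (k - i). \<forall>T. T \<subseteq> X2 \<and> card T = r \<longrightarrow>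
                     card {B\<in>Abar (k - i) j. T \<subseteq> B} = lamSb (k - i) r"
    and R_s: "\<forall>i\<in>R. s i < t \<and> sbar (k - i) < t"
    and R_i: "\<forall>i\<in>R. N i = Nbar (k - i)"
    and R_ii: "\<forall>i\<in>R. s i + sbar (k - i) \<ge> 2 * (t div 2)"
    and eps_w: "\<forall>i\<in>R. eps i \<le> 1 \<and> eps i \<le> w i \<and> w i \<le> N i div 2"
    and z_def: "\<forall>i\<in>R. z i = (if 2 * w i < N i then 2 * w i + 1 - eps i else 2 * w i - eps i)"
    and u01: "\<forall>i\<le>k. u i \<le> 1"
    and Lpos: "Lam > 0"
    and L_eq: "\<forall>r\<le>t.
         (\<Sum>i\<in>R. u i *
             (if r \<le> s i \<and> t - r \<le> sbar (k - i) then lamS i r * lamSb (k - i) (t - r) * N i * z i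
              else if r \<le> s i then lamS i r * lamb (k - i) (t - r) * z i
              else lam i r * lamSb (k - i) (t - r) * z i))
       + (\<Sum>i\<in>{0..k} - R. u i * lam i r * lamb (k - i) (t - r)) = Lam"
  shows "is_design X k t Lam
     ((\<Union>i\<in>R. times01
          {B \<union> Bb | B Bb. \<exists>h\<in>{1..N i}. \<exists>j\<in>{1..N i}.
              B \<in> A i h \<and> Bb \<in> Abar (k - i) j \<and> eps i \<le> cdist (N i) h j \<and> cdist (N i) h j \<le> w i}
          (u i))
      \<union> (\<Union>i\<in>{0..k} - R. times01 {B \<union> Bb | B Bb. B \<in> D i \<and> Bb \<in> Dbar (k - i)} (u i)))"
proof -
  define c where "c i h j \<longleftrightarrow> eps i \<le> cdist (N i) h j \<and> cdist (N i) h j \<le> w i" for i h j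
  define FR where "FR i = {B \<union> Bb | B Bb. \<exists>h\<in>{1..N i}. \<exists>j\<in>{1..N i}.
              B \<in> A i h \<and> Bb \<in> Abar (k - i) j \<and> eps i \<le> cdist (N i) h j \<and> cdist (N i) h j \<le> w i}" for i
  define FN where "FN i = {B \<union> Bb | B Bb. B \<in> D i \<and> Bb \<in> Dbar (k - i)}" for i
  define G where "G i = (if i \<in> R then times01 (FR i) (u i) else times01 (FN i) (u i))" for i
  have fin1: "finite X1" and fin2: "finite X2" using fin part(1) by auto
  have DX: "B \<subseteq> X1 \<and> card B = i" if "i \<le> k" "B \<in> D i" for i B
  proof (cases "i \<le> t")
    case True then show ?thesis using that D_small unfolding complete_blocks_def by auto
  next
    case False
    then have "is_design X1 i t (lam i t) (D i)" using that D_big by auto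
    then show ?thesis using that unfolding is_design_def by auto
  qed
  have DbX: "B \<subseteq> X2 \<and> card B = i" if "i \<le> k" "B \<in> Dbar i" for i B
  proof (cases "i \<le> t")
    case True then show ?thesis using that Dbar_small unfolding complete_blocks_def by auto
  next
    case False
    then have "is_design X2 i t (lamb i t) (Dbar i)" using that Dbar_big by auto
    then show ?thesis using that unfolding is_design_def by auto
  qed
  have AinD: "B \<in> D i" if "i \<in> R" "h \<in> {1..N i}" "B \<in> A i h" for i h B
  proof -
    have "is_class_partition (D i) (N i) (A i)" using R_part that(1) by blast
    then have "(\<Union>h\<in>{1..N i}. A i h) = D i" unfolding is_class_partition_def by blast
    then show ?thesis using that by blast
  qed
  have AbinD: "Bb \<in> Dbar (k - i)" if "i \<in> R" "j \<in> {1..N i}" "Bb \<in> Abar (k - i) j" for i j Bb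
  proof -
    have "is_class_partition (Dbar (k - i)) (N i) (Abar (k - i))" using R_part R_i that(1) by auto
    then have "(\<Union>h\<in>{1..N i}. Abar (k - i) h) = Dbar (k - i)" unfolding is_class_partition_def by blast
    then show ?thesis using that by blast
  qed
  have FR_FN: "FR i \<subseteq> FN i" if "i \<in> R" for i
  proof
    fix x assume "x \<in> FR i"
    then obtain B Bb h j where x: "x = B \<union> Bb" "h \<in> {1..N i}" "j \<in> {1..N i}" "B \<in> A i h" "Bb \<in> Abar (k - i) j"
      unfolding FR_def by blast
    have "B \<in> D i" using AinD[OF that x(2) x(4)] .
    moreover have "Bb \<in> Dbar (k - i)" using AbinD[OF that x(3) x(5)] .
    ultimately show "x \<in> FN i" unfolding FN_def using x(1) by blast
  qed
  have FN_prop: "x \<subseteq> X \<and> card x = k \<and> card (x \<inter> X1) = i" if ik: "i \<le> k" and xF: "x \<in> FN i" for i x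
  proof -
    obtain B Bb where x: "x = B \<union> Bb" "B \<in> D i" "Bb \<in> Dbar (k - i)" using xF unfolding FN_def by blast
    have B: "B \<subseteq> X1" "card B = i" using DX[OF ik x(2)] by auto
    have Bb: "Bb \<subseteq> X2" "card Bb = k - i" using DbX[of "k - i" Bb] x(3) by auto
    have fB: "finite B" "finite Bb" using B Bb fin1 fin2 finite_subset by auto
    have "card x = i + (k - i)" unfolding x(1) using card_Un_disjoint[OF fB] B Bb part(2) by auto
    moreover have "x \<inter> X1 = B" using x(1) B Bb part(2) by auto
    ultimately show ?thesis using x(1) B Bb part(1) ik by auto
  qed
  have G_prop: "x \<subseteq> X \<and> card x = k \<and> card (x \<inter> X1) = i" if "i \<le> k" "x \<in> G i" for i x
  proof -
    have "x \<in> FN i" using that FR_FN unfolding G_def times01_def by (auto split: if_splits)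
    then show ?thesis using FN_prop that(1) by blast
  qed
  have Gfin: "finite (G i)" if "i \<le> k" for i
  proof -
    have "G i \<subseteq> Pow X" using G_prop[OF that] by blast
    then show ?thesis using fin finite_subset by blast
  qed
  have blk: "(\<Union>i\<in>R. times01 (FR i) (u i)) \<union> (\<Union>i\<in>{0..k} - R. times01 (FN i) (u i))
           = (\<Union>i\<in>{0..k}. G i)"
    using R_sub unfolding G_def by (auto split: if_splits)
  have DXs: "B \<subseteq> X1" if "i \<le> k" "B \<in> D i" for i B using DX[OF that] by blast
  have DbXs: "Bb \<subseteq> X2" if "Bb \<in> Dbar (k - i)" for i Bb using DbX[of "k - i" Bb] that by auto
  have main: "card {x \<in> (\<Union>i\<in>{0..k}. G i). T \<subseteq> x} = Lam" if T: "T \<subseteq> X" "card T = t" for T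
  proof -
    define r where "r = card (T \<inter> X1)"
    have fT: "finite (T \<inter> X1)" "finite (T \<inter> X2)" using fin1 fin2 by auto
    have "T = (T \<inter> X1) \<union> (T \<inter> X2)" using T part(1) by auto
    then have "t = r + card (T \<inter> X2)" using card_Un_disjoint[OF fT] part(2) T(2) r_def by auto
    then have r2: "card (T \<inter> X2) = t - r" and rt: "r \<le> t" by auto
    have TX: "T \<subseteq> X1 \<union> X2" using T part(1) by auto
    define cnt where "cnt i = card {x \<in> (if i \<in> R then FR i else FN i). T \<subseteq> x}" for i
    have cG: "card {x \<in> G i. T \<subseteq> x} = u i * cnt i" if "i \<le> k" for i
      using u01 that unfolding G_def cnt_def times01_def by (cases "u i = 0") auto
    have U: "{x \<in> (\<Union>i\<in>{0..k}. G i). T \<subseteq> x} = (\<Union>i\<in>{0..k}. {x \<in> G i. T \<subseteq> x})" by auto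
    have "card {x \<in> (\<Union>i\<in>{0..k}. G i). T \<subseteq> x} = (\<Sum>i\<in>{0..k}. card {x \<in> G i. T \<subseteq> x})"
      unfolding U
    proof (rule card_UN_disjoint)
      show "finite {0..k}" by simp
      show "\<forall>i\<in>{0..k}. finite {x \<in> G i. T \<subseteq> x}" using Gfin by auto
      show "\<forall>i\<in>{0..k}. \<forall>j\<in>{0..k}. i \<noteq> j \<longrightarrow> {x \<in> G i. T \<subseteq> x} \<inter> {x \<in> G j. T \<subseteq> x} = {}"
        using G_prop by (auto simp: disjoint_iff) (metis atLeastAtMost_iff)
    qed
    also have "\<dots> = (\<Sum>i\<in>{0..k}. u i * cnt i)" using cG by (intro sum.cong) auto
    also have "\<dots> = (\<Sum>i\<in>{0..k} - R. u i * cnt i) + (\<Sum>i\<in>R. u i * cnt i)"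
      using R_sub by (simp add: sum.subset_diff)
    also have "(\<Sum>i\<in>{0..k} - R. u i * cnt i) = (\<Sum>i\<in>{0..k} - R. u i * lam i r * lamb (k - i) (t - r))"
    proof (rule sum.cong[OF refl])
      fix i assume i: "i \<in> {0..k} - R"
      have ik: "i \<le> k" using i by auto
      have "cnt i = card {x \<in> FN i. T \<subseteq> x}" using i unfolding cnt_def by simp
      also have "\<dots> = card {(B,Bb). (B \<in> D i \<and> Bb \<in> Dbar (k - i)) \<and> T \<inter> X1 \<subseteq> B \<and> T \<inter> X2 \<subseteq> Bb}"
        unfolding FN_def
        by (rule card_union_pairs[OF part(2) _ TX, of "\<lambda>B Bb. B \<in> D i \<and> Bb \<in> Dbar (k - i)"])
           (use ik DXs DbXs in blast)
      also have "{(B,Bb). (B \<in> D i \<and> Bb \<in> Dbar (k - i)) \<and> T \<inter> X1 \<subseteq> B \<and> T \<inter> X2 \<subseteq> Bb}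
          = {B \<in> D i. T \<inter> X1 \<subseteq> B} \<times> {Bb \<in> Dbar (k - i). T \<inter> X2 \<subseteq> Bb}" by auto
      also have "card \<dots> = lam i r * lamb (k - i) (t - r)"
        using lam_def lamb_def i rt r2 r_def by (simp add: card_cartesian_product)
      finally show "u i * cnt i = u i * lam i r * lamb (k - i) (t - r)" by simp
    qed
    also have "(\<Sum>i\<in>R. u i * cnt i) = (\<Sum>i\<in>R. u i *
             (if r \<le> s i \<and> t - r \<le> sbar (k - i) then lamS i r * lamSb (k - i) (t - r) * N i * z i
              else if r \<le> s i then lamS i r * lamb (k - i) (t - r) * z i
              else lam i r * lamSb (k - i) (t - r) * z i))"
    proof (rule sum.cong[OF refl])
      fix i assume i: "i \<in> R"
      have ik: "i \<le> k" using i R_sub by auto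
      define a where "a h = card {B \<in> A i h. T \<inter> X1 \<subseteq> B}" for h
      define b where "b j = card {Bb \<in> Abar (k - i) j. T \<inter> X2 \<subseteq> Bb}" for j
      have pA: "is_class_partition (D i) (N i) (A i)" and pB: "is_class_partition (Dbar (k - i)) (N i) (Abar (k - i))"
        using R_part R_i i by auto
      have finD: "finite (D i)"
      proof -
        have "D i \<subseteq> Pow X1" using DXs ik by blast
        then show ?thesis using fin1 finite_subset by blast
      qed
      have finDb: "finite (Dbar (k - i))"
      proof -
        have "Dbar (k - i) \<subseteq> Pow X2" using DbXs by blast
        then show ?thesis using fin2 finite_subset by blast
      qed
      have "cnt i = card {x \<in> FR i. T \<subseteq> x}" using i unfolding cnt_def by simp
      also have "\<dots> = card {(B,Bb). (\<exists>h\<in>{1..N i}. \<exists>j\<in>{1..N i}. B \<in> A i h \<and> Bb \<in> Abar (k - i) j \<and> c i h j)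
                        \<and> T \<inter> X1 \<subseteq> B \<and> T \<inter> X2 \<subseteq> Bb}"
        unfolding FR_def c_def
        by (rule card_union_pairs[OF part(2) _ TX])
           (use i ik AinD AbinD DXs DbXs in blast)
      also have "\<dots> = (\<Sum>h\<in>{1..N i}. \<Sum>j\<in>{1..N i}. if c i h j then a h * b j else 0)"
        unfolding a_def b_def
      proof (rule card_R_pairs)
        show "\<forall>h\<in>{1..N i}. \<forall>h'\<in>{1..N i}. h \<noteq> h' \<longrightarrow> A i h \<inter> A i h' = {}"
          using pA unfolding is_class_partition_def by blast
        show "\<forall>h\<in>{1..N i}. \<forall>h'\<in>{1..N i}. h \<noteq> h' \<longrightarrow> Abar (k - i) h \<inter> Abar (k - i) h' = {}"
          using pB unfolding is_class_partition_def by blast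
        show "\<forall>h\<in>{1..N i}. finite (A i h)"
          using pA finD unfolding is_class_partition_def by (auto intro: finite_subset)
        show "\<forall>h\<in>{1..N i}. finite (Abar (k - i) h)"
          using pB finDb unfolding is_class_partition_def by (auto intro: finite_subset)
      qed
      finally have cnt_eq: "cnt i = (\<Sum>h\<in>{1..N i}. \<Sum>j\<in>{1..N i}. if c i h j then a h * b j else 0)" .
      have ew: "eps i \<le> 1" "eps i \<le> w i" "w i \<le> N i div 2" using eps_w i by auto
      have zi: "z i = (if 2 * w i < N i then 2 * w i + 1 - eps i else 2 * w i - eps i)" using z_def i by auto
      have suma: "(\<Sum>h\<in>{1..N i}. a h) = lam i r"
        unfolding a_def using card_classes_sum[OF finD pA] lam_def ik rt r_def by simp
      have sumb: "(\<Sum>j\<in>{1..N i}. b j) = lamb (k - i) (t - r)"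
        unfolding b_def using card_classes_sum[OF finDb pB] lamb_def rt r2 by simp
      have aS: "\<forall>h\<in>{1..N i}. a h = lamS i r" if "r \<le> s i"
        unfolding a_def using lamS_def i that r_def by simp
      have bS: "\<forall>j\<in>{1..N i}. b j = lamSb (k - i) (t - r)" if "t - r \<le> sbar (k - i)"
        unfolding b_def using lamSb_def i that r2 R_i by simp
      have cnt_val: "cnt i = (if r \<le> s i \<and> t - r \<le> sbar (k - i) then lamS i r * lamSb (k - i) (t - r) * N i * z i
              else if r \<le> s i then lamS i r * lamb (k - i) (t - r) * z i
              else lam i r * lamSb (k - i) (t - r) * z i)"
      proof (cases "r \<le> s i")
        case True
        have ca: "cnt i = lamS i r * z i * (\<Sum>j\<in>{1..N i}. b j)"
          unfolding cnt_eq c_def by (rule dsum_a[OF ew zi aS[OF True]])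
        then show ?thesis
        proof (cases "t - r \<le> sbar (k - i)")
          case True2: True
          have "(\<Sum>j\<in>{1..N i}. b j) = N i * lamSb (k - i) (t - r)" using bS[OF True2] by simp
          then show ?thesis using ca True True2 by (simp add: mult_ac)
        next
          case False
          then show ?thesis using ca True sumb by (simp add: mult_ac)
        qed
      next
        case False
        have tr: "t - r \<le> sbar (k - i)"
        proof (rule ccontr)
          assume "\<not> t - r \<le> sbar (k - i)"
          moreover have "s i + sbar (k - i) \<ge> 2 * (t div 2)" using R_ii i by auto
          ultimately show False using False rt by presburger
        qed
        have cb: "cnt i = lamSb (k - i) (t - r) * z i * (\<Sum>h\<in>{1..N i}. a h)"
          unfolding cnt_eq c_def by (rule dsum_b[OF ew zi bS[OF tr]])
        then show ?thesis using cb False suma by (simp add: mult_ac)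
      qed
      show "u i * cnt i = u i *
             (if r \<le> s i \<and> t - r \<le> sbar (k - i) then lamS i r * lamSb (k - i) (t - r) * N i * z i
              else if r \<le> s i then lamS i r * lamb (k - i) (t - r) * z i
              else lam i r * lamSb (k - i) (t - r) * z i)" using cnt_val by simp
    qed
    finally show ?thesis using L_eq rt by (simp add: add.commute)
  qed
  let ?Blk = "(\<Union>i\<in>R. times01 (FR i) (u i)) \<union> (\<Union>i\<in>{0..k} - R. times01 (FN i) (u i))"
  have p1: "\<forall>x\<in>?Blk. x \<subseteq> X \<and> card x = k"
  proof
    fix x assume "x \<in> ?Blk"
    then obtain i where "i \<in> {0..k}" "x \<in> G i" unfolding blk by blast
    then show "x \<subseteq> X \<and> card x = k" using G_prop by auto
  qed
  have p2: "\<forall>T. T \<subseteq> X \<and> card T = t \<longrightarrow> card {x \<in> ?Blk. T \<subseteq> x} = Lam"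
    unfolding blk using main by blast
  have "is_design X k t Lam ?Blk" unfolding is_design_def using fin p1 p2 by blast
  then show ?thesis unfolding FR_def FN_def .
qed

end
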